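(* For every triple $(u,\lambda,v)\in\mathbb R^n\times\mathcal Q^*\times\mathbb R^n$ one has $\rho(u,\lambda,v)\ge0$. Moreover, whenever $\rho(u,\lambda,v)$ is finite, the infimum defining $\rho(u,\lambda,v)$ is attained.
   Context: Let $n,m\ge1$, $\mathcal Q:=\{(q_0,q_r)\in\mathbb R\times\mathbb R^m:\|q_r\|\le q_0\}$ and $\mathcal Q^*:=\{(q_0,q_r):\|q_r\|\le-q_0\}$. Let $g=(g_0,g_r):\mathbb R^n\to\mathbb R\times\mathbb R^m$ be $C^2$-smooth around $\bar x$; $\nabla g(\bar x)$ is its Jacobian and $\nabla^2 g(\bar x)(v,u)\in\mathbb R^{1+m}$ is the vector with components $v^T\nabla^2 g_i(\bar x)u$. The infimum function is $$\rho(u,\lambda,v):=\inf_{z\in\mathbb R^n}\Big\{-\lambda_0\Big(\|\nabla g_r(\bar x)z+\nabla^2 g_r(\bar x)(v,u)\|^2-\big(\nabla g_0(\bar x)z+\nabla^2 g_0(\bar x)(v,u)\big)^2\Big)\;\Big|\;\langle\lambda,\nabla g(\bar x)z+\nabla^2 g(\bar x)(v,u)\rangle=0\Big\},$$ with $\rho(u,\lambda,v):=+\infty$ if the constraint set is empty. *)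

theory Defs
  imports "HOL-Analysis.Analysis"
begin

definition C2_around :: "('a::euclidean_space \<Rightarrow> 'b::euclidean_space) \<Rightarrow> 'a \<Rightarrow> bool" where
  "C2_around g xb \<longleftrightarrow> (\<exists>S Dg D2g. open S \<and> xb \<in> S \<and>
      (\<forall>y\<in>S. (g has_derivative blinfun_apply (Dg y)) (at y)) \<and>
      (\<forall>y\<in>S. (Dg has_derivative blinfun_apply (D2g y)) (at y)) \<and>
      continuous_on S (D2g :: 'a \<Rightarrow> 'a \<Rightarrow>\<^sub>L ('a \<Rightarrow>\<^sub>L 'b)))"

definition jac :: "('a::real_normed_vector \<Rightarrow> 'b::real_normed_vector) \<Rightarrow> 'a \<Rightarrow> 'a \<Rightarrow> 'b" where
  "jac g xb z = frechet_derivative g (at xb) z"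

text \<open>Second-order term of g at xb in (v,u): componentwise v^T Hess g_i(xb) u.\<close>
definition hess :: "('a::real_normed_vector \<Rightarrow> 'b::real_normed_vector) \<Rightarrow> 'a \<Rightarrow> 'a \<Rightarrow> 'a \<Rightarrow> 'b" where
  "hess g xb v u = frechet_derivative (\<lambda>y. frechet_derivative g (at y) u) (at xb) v"

definition Qstar :: "(real \<times> (real^'m)) set" where
  "Qstar = {(q0, qr). norm qr \<le> - q0}"

definition rho_obj :: "(real^'n \<Rightarrow> real) \<Rightarrow> (real^'n \<Rightarrow> real^'m) \<Rightarrow> real^'n
     \<Rightarrow> real^'n \<Rightarrow> real \<times> (real^'m) \<Rightarrow> real^'n \<Rightarrow> real^'n \<Rightarrow> real" where
  "rho_obj g0 gr xb u lam v z =
     - fst lam * ((norm (jac gr xb z + hess gr xb v u))\<^sup>2 - (jac g0 xb z + hess g0 xb v u)\<^sup>2)"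

text \<open>The infimum function, extended-real valued; Inf {} = \<infinity>.\<close>
definition rho :: "(real^'n \<Rightarrow> real) \<Rightarrow> (real^'n \<Rightarrow> real^'m) \<Rightarrow> real^'n
     \<Rightarrow> real^'n \<Rightarrow> real \<times> (real^'m) \<Rightarrow> real^'n \<Rightarrow> ereal" where
  "rho g0 gr xb u lam v =
     Inf {ereal (rho_obj g0 gr xb u lam v z) | z.
            fst lam * (jac g0 xb z + hess g0 xb v u) + snd lam \<bullet> (jac gr xb z + hess gr xb v u) = 0}"

end

theory Submission
  imports Defs
begin

lemma C2_lin: "C2_around g xb \<Longrightarrow> linear (jac g xb)"
proof -
  assume "C2_around g xb"
  then obtain S Dg where "xb \<in> S" "\<forall>y\<in>S. (g has_derivative blinfun_apply (Dg y)) (at y)"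
    unfolding C2_around_def by blast
  then have "g differentiable at xb" by (auto intro: differentiableI)
  then have "linear (frechet_derivative g (at xb))" by (rule linear_frechet_derivative)
  moreover have "jac g xb = frechet_derivative g (at xb)" by (rule ext) (simp add: jac_def)
  ultimately show ?thesis by simp
qed

lemma affine_img:
  fixes F :: "'a::real_vector \<Rightarrow> 'b::real_vector" and l :: "'a \<Rightarrow> real"
  assumes "linear F" "linear l"
  shows "affine ((\<lambda>z. F z + k) ` {z. l z = d})"
  unfolding affine_alt
proof (intro ballI allI)
  fix x y u assume "x \<in> (\<lambda>z. F z + k) ` {z. l z = d}" "y \<in> (\<lambda>z. F z + k) ` {z. l z = d}"
  then obtain z1 z2 where z: "x = F z1 + k" "y = F z2 + k" "l z1 = d" "l z2 = d" by auto
  have "l ((1 - u) *\<^sub>R z1 + u *\<^sub>R z2) = (1 - u) * l z1 + u * l z2"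
    using assms(2) by (simp add: linear_add linear_cmul)
  then have "l ((1 - u) *\<^sub>R z1 + u *\<^sub>R z2) = d" using z by (simp add: algebra_simps)
  moreover have "F ((1 - u) *\<^sub>R z1 + u *\<^sub>R z2) = (1 - u) *\<^sub>R F z1 + u *\<^sub>R F z2"
    using assms(1) by (simp add: linear_add linear_cmul)
  then have "(1 - u) *\<^sub>R x + u *\<^sub>R y = F ((1 - u) *\<^sub>R z1 + u *\<^sub>R z2) + k"
    using z by (simp add: algebra_simps)
  ultimately show "(1 - u) *\<^sub>R x + u *\<^sub>R y \<in> (\<lambda>z. F z + k) ` {z. l z = d}" by blast
qed

lemma sq_identity:
  fixes c w :: "real^'m"
  assumes "norm c \<le> 1"
  defines "s \<equiv> (norm c)\<^sup>2"
  defines "t \<equiv> (if s = 0 then 0 else (1 - sqrt (1 - s)) / s)"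
  shows "(norm w)\<^sup>2 - (c \<bullet> w)\<^sup>2 = (norm (w - (t * (c \<bullet> w)) *\<^sub>R c))\<^sup>2"
proof (cases "s = 0")
  case True
  then have "c = 0" unfolding s_def by simp
  then show ?thesis by simp
next
  case False
  have s01: "0 < s" "s \<le> 1" using False assms(1) unfolding s_def
    by (auto simp: power_le_one)
  define r where "r = sqrt (1 - s)"
  have r2: "r\<^sup>2 = 1 - s" unfolding r_def using s01 by simp
  have tdef: "t = (1 - r) / s" using False by (simp add: t_def r_def)
  have "t * t * s - 2 * t = ((1-r)*(1-r) - 2*(1-r))/s" using False
    by (simp add: tdef field_simps power2_eq_square)
  also have "\<dots> = -(1 - r*r)/s" by (simp add: algebra_simps)
  also have "\<dots> = -1" using r2 False by (simp add: power2_eq_square)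
  finally have tt: "t * t * s - 2 * t = -1" .
  have "(norm (w - (t * (c \<bullet> w)) *\<^sub>R c))\<^sup>2 = (norm w)\<^sup>2 - 2 * t * (c \<bullet> w)\<^sup>2 + t * t * (c \<bullet> w)\<^sup>2 * s"
    unfolding s_def power2_norm_eq_inner
    by (simp add: inner_diff_left inner_diff_right inner_commute algebra_simps power2_eq_square)
  also have "\<dots> = (norm w)\<^sup>2 + (c \<bullet> w)\<^sup>2 * (t * t * s - 2 * t)" by (simp add: algebra_simps)
  finally show ?thesis using tt by simp
qed


theorem lemma4p4:
  fixes g0 :: "real^'n \<Rightarrow> real" and gr :: "real^'n \<Rightarrow> real^'m" and xb :: "real^'n"
  assumes "C2_around g0 xb" and "C2_around gr xb" and "lam \<in> Qstar"
  shows "rho g0 gr xb u lam v \<ge> 0 \<and>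
    (rho g0 gr xb u lam v \<noteq> \<infinity> \<and> rho g0 gr xb u lam v \<noteq> - \<infinity> \<longrightarrow>
      (\<exists>z. fst lam * (jac g0 xb z + hess g0 xb v u) + snd lam \<bullet> (jac gr xb z + hess gr xb v u) = 0 \<and>
           ereal (rho_obj g0 gr xb u lam v z) = rho g0 gr xb u lam v))"
proof -
  define l0 where "l0 = fst lam"
  define lr where "lr = snd lam"
  define A where "A = jac g0 xb"
  define B where "B = jac gr xb"
  define h0 where "h0 = hess g0 xb v u"
  define hr where "hr = hess gr xb v u"
  have linA: "linear A" unfolding A_def by (rule C2_lin[OF assms(1)])
  have linB: "linear B" unfolding B_def by (rule C2_lin[OF assms(2)])
  have lrn: "norm lr \<le> - l0" using assms(3) unfolding Qstar_def l0_def lr_def by auto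
  then have l0le: "l0 \<le> 0" by (smt (verit) norm_ge_zero)
  define c where "c = (if l0 = 0 then 0 else (- 1 / l0) *\<^sub>R lr)"
  have cn: "norm c \<le> 1"
  proof (cases "l0 = 0")
    case False
    then have "norm c = norm lr / (- l0)" unfolding c_def using l0le by (simp add: divide_simps)
    also have "\<dots> \<le> 1" using False l0le lrn by (simp add: divide_simps)
    finally show ?thesis .
  qed (simp add: c_def)
  define s where "s = (norm c)\<^sup>2"
  define t where "t = (if s = 0 then 0 else (1 - sqrt (1 - s)) / s)"
  define P where "P = (\<lambda>w::real^'m. w - (t * (c \<bullet> w)) *\<^sub>R c)"
  have linP: "linear P" unfolding P_def
    by (intro linearI) (simp_all add: inner_add_right algebra_simps)
  define cons where "cons = (\<lambda>z. l0 * (A z + h0) + lr \<bullet> (B z + hr) = 0)"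
  define obj where "obj = rho_obj g0 gr xb u lam v"
  have objE: "obj z = - l0 * ((norm (B z + hr))\<^sup>2 - (A z + h0)\<^sup>2)" for z
    unfolding obj_def rho_obj_def l0_def A_def B_def h0_def hr_def by simp
  have key: "obj z = (- l0) * (norm (P (B z + hr)))\<^sup>2" if "cons z" for z
  proof (cases "l0 = 0")
    case True
    then show ?thesis by (simp add: objE)
  next
    case False
    have "l0 * (A z + h0) = - (lr \<bullet> (B z + hr))" using that unfolding cons_def by simp
    then have "A z + h0 = c \<bullet> (B z + hr)" using False unfolding c_def
      by (simp add: field_simps)
    then show ?thesis unfolding objE P_def
      using sq_identity[OF cn, of "B z + hr"] unfolding s_def[symmetric] t_def[symmetric]
      by simp
  qed
  define R where "R = {ereal (obj z) | z. cons z}"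
  have rhoR: "rho g0 gr xb u lam v = Inf R"
    unfolding rho_def R_def obj_def cons_def l0_def lr_def A_def B_def h0_def hr_def by simp
  have nonneg: "Inf R \<ge> 0"
    unfolding R_def by (rule Inf_greatest) (auto simp: key l0le mult_nonpos_nonneg)
  have att: "\<exists>z. cons z \<and> ereal (obj z) = Inf R" if ne: "Inf R \<noteq> \<infinity>"
  proof -
    define l where "l = (\<lambda>z. l0 * A z + lr \<bullet> B z)"
    define d where "d = - (l0 * h0 + lr \<bullet> hr)"
    have linl: "linear l" unfolding l_def using linA linB
      by (intro linearI) (simp_all add: linear_add linear_cmul inner_add_right algebra_simps)
    have consl: "cons z \<longleftrightarrow> l z = d" for z
      unfolding cons_def l_def d_def by (auto simp: inner_add_right algebra_simps)
    define S where "S = (\<lambda>z. (P \<circ> B) z + P hr) ` {z. l z = d}"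
    have "affine S" unfolding S_def
      by (rule affine_img[OF linear_compose[OF linB linP] linl])
    then have clS: "closed S" by (rule affine_closed)
    have "R \<noteq> {}" using ne by (auto simp: top_ereal_def)
    then obtain z0 where "cons z0" unfolding R_def by auto
    then have "S \<noteq> {}" unfolding S_def using consl by auto
    then obtain x where xS: "x \<in> S" and xmin: "\<And>y. y \<in> S \<Longrightarrow> dist 0 x \<le> dist 0 y"
      using distance_attains_inf[OF clS] by blast
    then obtain zs where zs: "l zs = d" "x = P (B zs) + P hr" unfolding S_def by auto
    have Padd: "P (B z + hr) = P (B z) + P hr" for z using linP by (simp add: linear_add)
    have zsc: "cons zs" using zs consl by simp
    have le: "obj zs \<le> obj z" if "cons z" for z
    proof -
      have "P (B z) + P hr \<in> S" unfolding S_def using that consl by auto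
      then have "norm x \<le> norm (P (B z + hr))" using xmin Padd by (simp add: dist_norm)
      then have "(norm x)\<^sup>2 \<le> (norm (P (B z + hr)))\<^sup>2" by (simp add: power_mono)
      then have "(- l0) * (norm x)\<^sup>2 \<le> (- l0) * (norm (P (B z + hr)))\<^sup>2"
        by (rule mult_left_mono) (use l0le in simp)
      moreover have "x = P (B zs + hr)" using zs(2) Padd by simp
      ultimately show ?thesis using key[OF that] key[OF zsc] by simp
    qed
    have "Inf R = ereal (obj zs)"
    proof (rule antisym)
      show "Inf R \<le> ereal (obj zs)" by (rule Inf_lower) (auto simp: R_def zsc)
      show "ereal (obj zs) \<le> Inf R" by (rule Inf_greatest) (auto simp: R_def le)
    qed
    then show ?thesis using zsc by auto
  qed
  show ?thesis
    using nonneg att unfolding rhoR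
    unfolding cons_def obj_def l0_def lr_def A_def B_def h0_def hr_def by auto
qed

end
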